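(* $$\bigcup_{P\in S^n}\overline{\mathcal{H}_{\rm Wulff}(S^n,P)}=\overline{\mathcal{H}_{\mbox{s-conv}}(S^n)}.$$
   Context: $S^n$ is the unit sphere in $\mathbb{R}^{n+1}$, $n\ge1$; $|PQ|=\arccos(P\cdot Q)$. $H(P)=\{Q\in S^n:P\cdot Q\ge0\}$. $\mathcal{H}(S^n)$ is the set of non-empty closed subsets of $S^n$ with the Pompeiu-Hausdorff metric $h(A,B)=\max\{\max_{x\in A}\min_{y\in B}|xy|,\ \max_{y\in B}\min_{x\in A}|xy|\}$. A subset is hemispherical if it is disjoint from $H(Q)$ for some $Q\in S^n$. For $A,B$ in a hemispherical set, the arc $AB=\{((1-t)A+tB)/\|(1-t)A+tB\|:0\le t\le1\}$; a hemispherical set $W$ is spherical convex if $AB\subset W$ for all $A,B\in W$, and a spherical convex body if moreover it is closed and has an interior point. For $P\in S^n$, $\mathcal{H}_{\rm Wulff}(S^n,P)$ is the set of $W\in\mathcal{H}(S^n)$ with $W\cap H(-P)=\emptyset$, $P$ an interior point of $W$, and $W$ a spherical convex body. $\mathcal{H}_{\mbox{s-conv}}(S^n)$ is the set of non-empty closed spherical convex subsets of $S^n$. Overlines denote closures in $(\mathcal{H}(S^n),h)$. *)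

theory Defs
  imports "HOL-Analysis.Analysis"
begin

text \<open>The unit sphere S^n is modelled as sphere 0 1 in a Euclidean space 'a
  of dimension n+1 (so DIM('a) \<ge> 2 encodes n \<ge> 1).\<close>

definition sdist :: "'a::euclidean_space \<Rightarrow> 'a \<Rightarrow> real" where
  "sdist P Q = arccos (P \<bullet> Q)"

definition hemi :: "'a::euclidean_space \<Rightarrow> 'a set" where
  "hemi P = {Q \<in> sphere 0 1. P \<bullet> Q \<ge> 0}"

definition HS :: "'a::euclidean_space set set" where
  "HS = {A. A \<noteq> {} \<and> A \<subseteq> sphere 0 1 \<and> closed A}"

definition sph_hausdorff :: "'a::euclidean_space set \<Rightarrow> 'a set \<Rightarrow> real" where
  "sph_hausdorff A B =
     max (SUP x\<in>A. INF y\<in>B. sdist x y) (SUP y\<in>B. INF x\<in>A. sdist x y)"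

definition hemispherical :: "'a::euclidean_space set \<Rightarrow> bool" where
  "hemispherical W \<longleftrightarrow> W \<subseteq> sphere 0 1 \<and> (\<exists>Q\<in>sphere 0 1. W \<inter> hemi Q = {})"

definition sarc :: "'a::euclidean_space \<Rightarrow> 'a \<Rightarrow> 'a set" where
  "sarc A B = {((1 - t) *\<^sub>R A + t *\<^sub>R B) /\<^sub>R norm ((1 - t) *\<^sub>R A + t *\<^sub>R B) | t. 0 \<le> t \<and> t \<le> 1}"

definition sconvex :: "'a::euclidean_space set \<Rightarrow> bool" where
  "sconvex W \<longleftrightarrow> hemispherical W \<and> (\<forall>A\<in>W. \<forall>B\<in>W. sarc A B \<subseteq> W)"

definition sinterior_point :: "'a::euclidean_space \<Rightarrow> 'a set \<Rightarrow> bool" where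
  "sinterior_point P W \<longleftrightarrow> (\<exists>e>0. sphere 0 1 \<inter> ball P e \<subseteq> W)"

definition sconvex_body :: "'a::euclidean_space set \<Rightarrow> bool" where
  "sconvex_body W \<longleftrightarrow> sconvex W \<and> closed W \<and> (\<exists>P. sinterior_point P W)"

definition HWulff :: "'a::euclidean_space \<Rightarrow> 'a set set" where
  "HWulff P = {W \<in> HS. W \<inter> hemi (-P) = {} \<and> sinterior_point P W \<and> sconvex_body W}"

definition Hsconv :: "'a::euclidean_space set set" where
  "Hsconv = {W. W \<noteq> {} \<and> closed W \<and> sconvex W}"

definition hclosure :: "'a::euclidean_space set set \<Rightarrow> 'a set set" where
  "hclosure F = {X \<in> HS. \<forall>e>0. \<exists>W\<in>F. sph_hausdorff X W < e}"

end

theory Submission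
  imports Defs
begin

lemma sdist_basic:
  fixes x y :: "'a::euclidean_space"
  assumes x: "x \<in> sphere 0 1" and y: "y \<in> sphere 0 1"
  shows "cos (sdist x y) = x \<bullet> y" "0 \<le> sdist x y" "sdist x y \<le> pi"
    "(dist x y)^2 = 2 - 2 * (x \<bullet> y)" "\<bar>x \<bullet> y\<bar> \<le> 1"
proof -
  have nx: "norm x = 1" and ny: "norm y = 1" using x y by auto
  show ab: "\<bar>x \<bullet> y\<bar> \<le> 1" using Cauchy_Schwarz_ineq2[of x y] nx ny by simp
  then show "cos (sdist x y) = x \<bullet> y" unfolding sdist_def by (simp add: cos_arccos_abs)
  show "0 \<le> sdist x y" "sdist x y \<le> pi" unfolding sdist_def using ab
    by (auto intro: arccos_lbound arccos_ubound)
  have "(dist x y)^2 = x \<bullet> x - 2 * (x \<bullet> y) + y \<bullet> y"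
    by (simp add: dist_norm power2_norm_eq_inner inner_diff_left inner_diff_right inner_commute)
  then show "(dist x y)^2 = 2 - 2 * (x \<bullet> y)"
    using nx ny by (simp add: inner_commute flip: power2_norm_eq_inner)
qed

lemma dist_le_sdist:
  fixes x y :: "'a::euclidean_space"
  assumes x: "x \<in> sphere 0 1" and y: "y \<in> sphere 0 1"
  shows "dist x y \<le> sdist x y"
proof -
  let ?t = "sdist x y"
  note b = sdist_basic[OF x y]
  have "cos ?t = 1 - 2 * (sin (?t/2))^2" using cos_double_sin[of "?t/2"] by simp
  moreover have "(sin (?t/2))^2 \<le> (?t/2)^2"
    using abs_sin_x_le_abs_x[of "?t/2"] by (metis abs_ge_zero power2_abs power_mono)
  ultimately have "(dist x y)^2 \<le> ?t^2" using b by (simp add: power_divide)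
  then show ?thesis using b(2) by (meson power2_le_imp_le)
qed

lemma sdist_small:
  assumes "e > 0"
  shows "\<exists>d>0. \<forall>x y::'a::euclidean_space. x \<in> sphere 0 1 \<longrightarrow> y \<in> sphere 0 1 \<longrightarrow> dist x y < d \<longrightarrow> sdist x y < e"
proof -
  define e' where "e' = min e pi"
  have e': "0 < e'" "e' \<le> pi" "e' \<le> e" using assms pi_gt_zero unfolding e'_def by auto
  have "cos e' < 1"
  proof -
    have "cos e' < cos 0" using e' by (intro cos_monotone_0_pi) auto
    then show ?thesis by simp
  qed
  define d where "d = sqrt (2 - 2 * cos e')"
  have d: "d > 0" using \<open>cos e' < 1\<close> unfolding d_def by simp
  show ?thesis
  proof (intro exI[of _ d] conjI d allI impI)
    fix x y :: 'a assume x: "x \<in> sphere 0 1" and y: "y \<in> sphere 0 1" and dd: "dist x y < d"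
    note b = sdist_basic[OF x y]
    show "sdist x y < e"
    proof (rule ccontr)
      assume "\<not> sdist x y < e"
      then have "e' \<le> sdist x y" using e' by auto
      then have "cos (sdist x y) \<le> cos e'" using b e' by (intro cos_monotone_0_pi_le) auto
      then have "d^2 \<le> (dist x y)^2" using b d unfolding d_def by simp
      then have "d \<le> dist x y" using zero_le_dist by (meson power2_le_imp_le)
      then show False using dd by simp
    qed
  qed
qed

definition hclose :: "'a::euclidean_space set \<Rightarrow> 'a set \<Rightarrow> real \<Rightarrow> bool" where
  "hclose X W e \<longleftrightarrow> (\<forall>x\<in>X. \<exists>y\<in>W. dist x y < e) \<and> (\<forall>y\<in>W. \<exists>x\<in>X. dist x y < e)"

lemma inf_part_bounds:
  fixes x :: "'a::euclidean_space"
  assumes "x \<in> sphere 0 1" "W \<noteq> {}" "W \<subseteq> sphere 0 1"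
  shows "bdd_below ((\<lambda>y. sdist x y) ` W)" "(INF y\<in>W. sdist x y) \<le> pi"
    "bdd_below ((\<lambda>y. sdist y x) ` W)" "(INF y\<in>W. sdist y x) \<le> pi"
proof -
  show b1: "bdd_below ((\<lambda>y. sdist x y) ` W)"
    using assms sdist_basic(2)[of x] by (intro bdd_belowI[of _ 0]) auto
  show b2: "bdd_below ((\<lambda>y. sdist y x) ` W)"
    using assms sdist_basic(2)[of _ x] by (intro bdd_belowI[of _ 0]) auto
  obtain y where y: "y \<in> W" using assms by auto
  have "(INF y\<in>W. sdist x y) \<le> sdist x y" by (rule cINF_lower[OF b1 y])
  also have "\<dots> \<le> pi" using sdist_basic(3)[of x y] assms y by auto
  finally show "(INF y\<in>W. sdist x y) \<le> pi" .
  have "(INF y\<in>W. sdist y x) \<le> sdist y x" by (rule cINF_lower[OF b2 y])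
  also have "\<dots> \<le> pi" using sdist_basic(3)[of y x] assms y by auto
  finally show "(INF y\<in>W. sdist y x) \<le> pi" .
qed

lemma sph_h_imp_hclose:
  fixes X W :: "'a::euclidean_space set"
  assumes X: "X \<noteq> {}" "X \<subseteq> sphere 0 1" and W: "W \<noteq> {}" "W \<subseteq> sphere 0 1"
    and h: "sph_hausdorff X W < e"
  shows "hclose X W e"
  unfolding hclose_def
proof safe
  fix x assume x: "x \<in> X"
  have bA: "bdd_above ((\<lambda>x. INF y\<in>W. sdist x y) ` X)"
    using inf_part_bounds(2)[OF _ W] X by (intro bdd_aboveI[of _ pi]) auto
  have "(INF y\<in>W. sdist x y) \<le> (SUP x\<in>X. INF y\<in>W. sdist x y)" by (rule cSUP_upper[OF x bA])
  also have "\<dots> < e" using h unfolding sph_hausdorff_def by simp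
  finally have "(INF y\<in>W. sdist x y) < e" .
  moreover have xs: "x \<in> sphere 0 1" using x X by auto
  ultimately obtain y where y: "y \<in> W" "sdist x y < e"
    using cINF_less_iff[OF W(1) inf_part_bounds(1)[OF xs W]] by auto
  have "dist x y \<le> sdist x y" using x y X W by (intro dist_le_sdist) auto
  then show "\<exists>y\<in>W. dist x y < e" using y by force
next
  fix y assume y: "y \<in> W"
  have bA: "bdd_above ((\<lambda>y. INF x\<in>X. sdist x y) ` W)"
    using inf_part_bounds(4)[OF _ X] W by (intro bdd_aboveI[of _ pi]) auto
  have "(INF x\<in>X. sdist x y) \<le> (SUP y\<in>W. INF x\<in>X. sdist x y)" by (rule cSUP_upper[OF y bA])
  also have "\<dots> < e" using h unfolding sph_hausdorff_def by simp
  finally have "(INF x\<in>X. sdist x y) < e" .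
  moreover have ys: "y \<in> sphere 0 1" using y W by auto
  ultimately obtain x where x: "x \<in> X" "sdist x y < e"
    using cINF_less_iff[OF X(1) inf_part_bounds(3)[OF ys X]] by auto
  have "dist x y \<le> sdist x y" using x y X W by (intro dist_le_sdist) auto
  then show "\<exists>x\<in>X. dist x y < e" using x by force
qed

lemma sph_h_le:
  fixes X W :: "'a::euclidean_space set"
  assumes X: "X \<noteq> {}" "X \<subseteq> sphere 0 1" and W: "W \<noteq> {}" "W \<subseteq> sphere 0 1"
    and c1: "\<forall>x\<in>X. \<exists>y\<in>W. sdist x y \<le> c" and c2: "\<forall>y\<in>W. \<exists>x\<in>X. sdist x y \<le> c"
  shows "sph_hausdorff X W \<le> c"
proof -
  have "(SUP x\<in>X. INF y\<in>W. sdist x y) \<le> c"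
  proof (rule cSUP_least[OF X(1)])
    fix x assume x: "x \<in> X"
    then obtain y where y: "y \<in> W" "sdist x y \<le> c" using c1 by auto
    have "(INF y\<in>W. sdist x y) \<le> sdist x y" using inf_part_bounds(1)[OF _ W] x X y
      by (intro cINF_lower) auto
    then show "(INF y\<in>W. sdist x y) \<le> c" using y by simp
  qed
  moreover have "(SUP y\<in>W. INF x\<in>X. sdist x y) \<le> c"
  proof (rule cSUP_least[OF W(1)])
    fix y assume y: "y \<in> W"
    then obtain x where x: "x \<in> X" "sdist x y \<le> c" using c2 by auto
    have "(INF x\<in>X. sdist x y) \<le> sdist x y" using inf_part_bounds(3)[OF _ X] x W y
      by (intro cINF_lower) auto
    then show "(INF x\<in>X. sdist x y) \<le> c" using x by simp
  qed
  ultimately show ?thesis unfolding sph_hausdorff_def by simp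
qed

lemma hclosure_alt:
  fixes F :: "'a::euclidean_space set set"
  assumes F: "\<forall>W\<in>F. W \<noteq> {} \<and> W \<subseteq> sphere 0 1"
  shows "hclosure F = {X \<in> HS. \<forall>e>0. \<exists>W\<in>F. hclose X W e}"
proof safe
  fix X e assume X: "X \<in> hclosure F" and e: "(e::real) > 0"
  then obtain W where W: "W \<in> F" "sph_hausdorff X W < e" unfolding hclosure_def by auto
  show "\<exists>W\<in>F. hclose X W e"
    using W F X sph_h_imp_hclose[of X W e] unfolding hclosure_def HS_def by auto
next
  fix X assume "X \<in> hclosure F" then show "X \<in> HS" unfolding hclosure_def by auto
next
  fix X assume X: "X \<in> HS" and H: "\<forall>e>0. \<exists>W\<in>F. hclose X W e"
  show "X \<in> hclosure F" unfolding hclosure_def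
  proof (intro CollectI conjI X allI impI)
    fix e :: real assume e: "e > 0"
    then obtain d where d: "d > 0" "\<forall>x y::'a. x \<in> sphere 0 1 \<longrightarrow> y \<in> sphere 0 1 \<longrightarrow> dist x y < d \<longrightarrow> sdist x y < e/2"
      using sdist_small[of "e/2"] by auto
    obtain W where W: "W \<in> F" "hclose X W d" using H d by auto
    have X1: "X \<noteq> {}" "X \<subseteq> sphere 0 1" using X unfolding HS_def by auto
    have W1: "W \<noteq> {}" "W \<subseteq> sphere 0 1" using W F by auto
    have "sph_hausdorff X W \<le> e/2"
    proof (rule sph_h_le[OF X1 W1])
      show "\<forall>x\<in>X. \<exists>y\<in>W. sdist x y \<le> e/2"
      proof
        fix x assume x: "x \<in> X"
        then obtain y where "y \<in> W" "dist x y < d" using W(2) unfolding hclose_def by auto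
        then show "\<exists>y\<in>W. sdist x y \<le> e/2" using d(2) x X1 W1 by (meson less_imp_le subsetD)
      qed
      show "\<forall>y\<in>W. \<exists>x\<in>X. sdist x y \<le> e/2"
      proof
        fix y assume y: "y \<in> W"
        then obtain x where "x \<in> X" "dist x y < d" using W(2) unfolding hclose_def by auto
        then show "\<exists>x\<in>X. sdist x y \<le> e/2" using d(2) y X1 W1 by (meson less_imp_le subsetD)
      qed
    qed
    then show "\<exists>W\<in>F. sph_hausdorff X W < e" using W e by force
  qed
qed

lemma hclose_trans: "hclose X Y a \<Longrightarrow> hclose Y Z b \<Longrightarrow> hclose X Z (a + b)"
  unfolding hclose_def
  by (smt (verit, ccfv_SIG) dist_triangle)

lemma norm_normalize_diff:
  fixes u v :: "'a::euclidean_space"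
  assumes "u \<noteq> 0" "v \<noteq> 0"
  shows "norm (u /\<^sub>R norm u - v /\<^sub>R norm v) \<le> 2 * norm (u - v) / norm v"
proof -
  have nu: "norm u > 0" and nv: "norm v > 0" using assms by auto
  have eq: "u /\<^sub>R norm u - v /\<^sub>R norm v = (u - v) /\<^sub>R norm v + (1/norm u - 1/norm v) *\<^sub>R u"
  proof -
    have "(1/norm u - 1/norm v) *\<^sub>R u = u /\<^sub>R norm u - u /\<^sub>R norm v"
      by (simp add: scaleR_diff_left divide_inverse)
    moreover have "(u - v) /\<^sub>R norm v = u /\<^sub>R norm v - v /\<^sub>R norm v"
      by (simp add: scaleR_diff_right)
    ultimately show ?thesis by simp
  qed
  have k: "(1/norm u - 1/norm v) * norm u = (norm v - norm u) / norm v"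
    using nu nv by (simp add: divide_simps)
  have "norm ((1/norm u - 1/norm v) *\<^sub>R u) = \<bar>(1/norm u - 1/norm v) * norm u\<bar>"
    by (simp add: abs_mult)
  also have "\<dots> = \<bar>norm v - norm u\<bar> / norm v" unfolding k using nv by simp
  also have "\<dots> \<le> norm (u - v) / norm v"
    using nv norm_triangle_ineq3[of v u] by (simp add: divide_right_mono norm_minus_commute)
  finally have *: "norm ((1/norm u - 1/norm v) *\<^sub>R u) \<le> norm (u - v) / norm v" .
  have "norm (u /\<^sub>R norm u - v /\<^sub>R norm v) \<le> norm ((u - v) /\<^sub>R norm v) + norm ((1/norm u - 1/norm v) *\<^sub>R u)"
    unfolding eq by (rule norm_triangle_ineq)
  also have "norm ((u - v) /\<^sub>R norm v) = norm (u - v) / norm v"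
    using nv by (simp add: divide_inverse mult.commute)
  finally show ?thesis using * by simp
qed

lemma sarc_normalize_image:
  fixes S :: "'a::euclidean_space set"
  assumes S: "convex S" and pos: "\<forall>y\<in>S. P \<bullet> y > 0"
    and A: "A \<in> (\<lambda>x. x /\<^sub>R norm x) ` S" and B: "B \<in> (\<lambda>x. x /\<^sub>R norm x) ` S"
  shows "sarc A B \<subseteq> (\<lambda>x. x /\<^sub>R norm x) ` S"
proof
  fix z assume "z \<in> sarc A B"
  then obtain t where t: "0 \<le> t" "t \<le> 1"
    and z: "z = ((1 - t) *\<^sub>R A + t *\<^sub>R B) /\<^sub>R norm ((1 - t) *\<^sub>R A + t *\<^sub>R B)"
    unfolding sarc_def by auto
  obtain a where a: "a \<in> S" "A = a /\<^sub>R norm a" using A by auto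
  obtain b where b: "b \<in> S" "B = b /\<^sub>R norm b" using B by auto
  have na: "norm a > 0" using pos a by fastforce
  have nb: "norm b > 0" using pos b by fastforce
  define \<sigma> where "\<sigma> = (1 - t) / norm a + t / norm b"
  have \<sigma>: "\<sigma> > 0" unfolding \<sigma>_def using t na nb
    by (cases "t = 0") (auto intro: add_nonneg_pos add_pos_nonneg)
  define v where "v = ((1 - t) / norm a / \<sigma>) *\<^sub>R a + (t / norm b / \<sigma>) *\<^sub>R b"
  have sum1: "(1 - t) / norm a / \<sigma> + t / norm b / \<sigma> = 1"
  proof -
    have "(1 - t) / norm a / \<sigma> + t / norm b / \<sigma> = ((1 - t) / norm a + t / norm b) / \<sigma>"
      by (simp add: add_divide_distrib)
    also have "\<dots> = 1" using \<sigma> unfolding \<sigma>_def by simp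
    finally show ?thesis .
  qed
  have "v \<in> S" unfolding v_def
    using t na nb \<sigma> sum1 by (intro convexD[OF S a(1) b(1)]) auto
  have "\<sigma> *\<^sub>R v = ((1-t)/norm a) *\<^sub>R a + (t/norm b) *\<^sub>R b" unfolding v_def using \<sigma>
    by (simp add: scaleR_add_right)
  then have zz: "(1 - t) *\<^sub>R A + t *\<^sub>R B = \<sigma> *\<^sub>R v"
    unfolding a(2) b(2) by (simp add: divide_inverse mult.commute)
  have "z = v /\<^sub>R norm v" unfolding z zz using \<sigma> by simp
  then show "z \<in> (\<lambda>x. x /\<^sub>R norm x) ` S" using \<open>v \<in> S\<close> by auto
qed

lemma cone_convex:
  fixes W :: "'a::euclidean_space set"
  assumes Ws: "W \<subseteq> sphere 0 1" and c: "\<forall>w\<in>W. c \<bullet> w > 0"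
    and arc: "\<forall>A\<in>W. \<forall>B\<in>W. sarc A B \<subseteq> W"
  shows "convex {s *\<^sub>R w | s w. s > 0 \<and> w \<in> W}"
proof (rule convexI)
  fix x y :: 'a and u v :: real
  assume x: "x \<in> {s *\<^sub>R w | s w. s > 0 \<and> w \<in> W}" and y: "y \<in> {s *\<^sub>R w | s w. s > 0 \<and> w \<in> W}"
    and u: "0 \<le> u" and v: "0 \<le> v" and uv: "u + v = 1"
  obtain s1 w1 where 1: "x = s1 *\<^sub>R w1" "s1 > 0" "w1 \<in> W" using x by auto
  obtain s2 w2 where 2: "y = s2 *\<^sub>R w2" "s2 > 0" "w2 \<in> W" using y by auto
  define \<sigma> where "\<sigma> = u * s1 + v * s2"
  have \<sigma>: "\<sigma> > 0" unfolding \<sigma>_def using u v uv 1 2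
    by (cases "u = 0") (auto intro: add_pos_nonneg)
  define t where "t = v * s2 / \<sigma>"
  have t: "0 \<le> t" "t \<le> 1" "1 - t = u * s1 / \<sigma>" unfolding t_def using \<sigma> u v 1 2
    by (auto simp: \<sigma>_def field_simps)
  define z where "z = (1 - t) *\<^sub>R w1 + t *\<^sub>R w2"
  have "c \<bullet> z > 0" unfolding z_def using c 1(3) 2(3) t(1) t(2)
    by (cases "t = 0") (auto simp: inner_add_right intro!: add_pos_nonneg add_nonneg_pos)
  then have nz: "norm z > 0" by (metis inner_zero_right less_irrefl zero_less_norm_iff)
  have "z /\<^sub>R norm z \<in> sarc w1 w2" unfolding sarc_def z_def using t by blast
  then have zW: "z /\<^sub>R norm z \<in> W" using arc 1 2 by blast
  have e1: "\<sigma> * (1 - t) = u * s1" using t(3) \<sigma> by simp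
  have e2: "\<sigma> * t = v * s2" using \<sigma> unfolding t_def by simp
  have "u *\<^sub>R x + v *\<^sub>R y = \<sigma> *\<^sub>R z" unfolding 1 2 z_def
    by (simp add: scaleR_add_right e1 e2 mult.commute)
  also have "\<dots> = (\<sigma> * norm z) *\<^sub>R (z /\<^sub>R norm z)" using nz by simp
  finally have eq: "u *\<^sub>R x + v *\<^sub>R y = (\<sigma> * norm z) *\<^sub>R (z /\<^sub>R norm z)" .
  have pos: "\<sigma> * norm z > 0" using \<sigma> nz by simp
  show "u *\<^sub>R x + v *\<^sub>R y \<in> {s *\<^sub>R w | s w. s > 0 \<and> w \<in> W}"
    apply (rule CollectI)
    apply (rule exI[of _ "\<sigma> * norm z"])
    apply (rule exI[of _ "z /\<^sub>R norm z"])
    apply (intro conjI)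
      apply (rule eq)
     apply (rule pos)
    apply (rule zW)
    done
qed

lemma approx_wulff:
  fixes W :: "'a::euclidean_space set"
  assumes W: "W \<in> Hsconv"
  shows "\<exists>P\<in>sphere 0 1. \<forall>e>0. \<exists>W'\<in>HWulff P. hclose W W' e"
proof -
  have Wne: "W \<noteq> {}" and Wcl: "closed W" and Wsc: "sconvex W" using W unfolding Hsconv_def by auto
  have Ws: "W \<subseteq> sphere 0 1" using Wsc unfolding sconvex_def hemispherical_def by auto
  obtain Q where Q: "Q \<in> sphere 0 1" "W \<inter> hemi Q = {}"
    using Wsc unfolding sconvex_def hemispherical_def by auto
  have arc: "\<forall>A\<in>W. \<forall>B\<in>W. sarc A B \<subseteq> W" using Wsc unfolding sconvex_def by auto
  define c where "c = - Q"
  have cW: "\<forall>w\<in>W. c \<bullet> w > 0"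
  proof
    fix w assume w: "w \<in> W"
    then have "w \<notin> hemi Q" using Q by auto
    then have "\<not> Q \<bullet> w \<ge> 0" using w Ws unfolding hemi_def by auto
    then show "c \<bullet> w > 0" unfolding c_def by simp
  qed
  have Wcp: "compact W" using Wcl Ws by (metis bounded_sphere bounded_subset compact_eq_bounded_closed)
  define C where "C = convex hull W"
  have Ccp: "compact C" unfolding C_def by (rule compact_convex_hull[OF Wcp])
  have Ccv: "convex C" unfolding C_def by simp
  have Cne: "C \<noteq> {}" unfolding C_def using Wne by simp
  have WC: "W \<subseteq> C" unfolding C_def by (rule hull_subset)
  have Cpos: "\<forall>y\<in>C. c \<bullet> y > 0"
  proof -
    have "C \<subseteq> {y. c \<bullet> y > 0}" unfolding C_def
      using cW convex_halfspace_gt[of 0 c] by (intro hull_minimal) auto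
    then show ?thesis by auto
  qed
  have CD: "C \<subseteq> {s *\<^sub>R w | s w. s > 0 \<and> w \<in> W}" unfolding C_def
  proof (rule hull_minimal)
    show "W \<subseteq> {s *\<^sub>R w | s w. s > 0 \<and> w \<in> W}"
    proof
      fix w assume "w \<in> W"
      then show "w \<in> {s *\<^sub>R w | s w. s > 0 \<and> w \<in> W}"
        by (intro CollectI exI[of _ 1] exI[of _ w]) simp
    qed
    show "convex {s *\<^sub>R w | s w. s > 0 \<and> w \<in> W}" by (rule cone_convex[OF Ws cW arc])
  qed
  have normC: "\<forall>y\<in>C. y /\<^sub>R norm y \<in> W"
  proof
    fix y assume "y \<in> C"
    then obtain s w where sw: "y = s *\<^sub>R w" "s > 0" "w \<in> W" using CD by blast
    have "norm w = 1" using sw Ws by auto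
    then have "y /\<^sub>R norm y = w" using sw by simp
    then show "y /\<^sub>R norm y \<in> W" using sw by simp
  qed
  have Cball: "C \<subseteq> cball 0 1" unfolding C_def using Ws
    by (intro hull_minimal) (auto simp: convex_cball)
  define P0 where "P0 = closest_point C 0"
  have P0C: "P0 \<in> C" unfolding P0_def using Ccp Cne by (simp add: closest_point_in_set compact_imp_closed)
  have P0min: "\<forall>y\<in>C. dist 0 P0 \<le> dist 0 y" unfolding P0_def
    by (rule closest_point_exists(2)[OF compact_imp_closed[OF Ccp] Cne])
  have P0dot: "\<forall>y\<in>C. P0 \<bullet> y \<ge> P0 \<bullet> P0"
  proof
    fix y assume y: "y \<in> C"
    have "inner (0 - P0) (y - P0) \<le> 0"
      by (rule any_closest_point_dot[OF Ccv compact_imp_closed[OF Ccp] P0C y P0min])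
    then show "P0 \<bullet> y \<ge> P0 \<bullet> P0" by (simp add: inner_diff_right)
  qed
  have P0nz: "P0 \<noteq> 0" using Cpos P0C by fastforce
  define m0 where "m0 = norm P0"
  have m0: "m0 > 0" "m0 \<le> 1" unfolding m0_def using P0nz Cball P0C by auto
  define P where "P = P0 /\<^sub>R m0"
  have Ps: "P \<in> sphere 0 1" unfolding P_def m0_def using P0nz by simp
  have Pge: "\<forall>y\<in>C. P \<bullet> y \<ge> m0"
  proof
    fix y assume "y \<in> C"
    then have "P0 \<bullet> y \<ge> m0 * m0" using P0dot unfolding m0_def by (simp add: power2_eq_square[symmetric] dot_square_norm)
    then show "P \<bullet> y \<ge> m0" unfolding P_def using m0 by (simp add: field_simps)
  qed
  have Cnorm: "\<forall>y\<in>C. norm y \<ge> m0"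
  proof
    fix y assume "y \<in> C"
    then have "m0 \<le> P \<bullet> y" using Pge by auto
    also have "\<dots> \<le> norm P * norm y" by (rule norm_cauchy_schwarz)
    finally show "norm y \<ge> m0" using Ps by simp
  qed
  show ?thesis
  proof (intro bexI[OF _ Ps] allI impI)
    fix e :: real assume e: "e > 0"
    define r where "r = min (m0/2) (e * m0 / 4)"
    have r: "r > 0" "r \<le> m0/2" "r \<le> e * m0 / 4" unfolding r_def using m0 e by auto
    define Cr where "Cr = {y + z | y z. y \<in> C \<and> z \<in> cball 0 r}"
    have Cr_eq: "Cr = C + cball 0 r" unfolding Cr_def set_plus_def by force
    have Crcv: "convex Cr" unfolding Cr_eq by (intro convex_set_plus Ccv convex_cball)
    have Crcp: "compact Cr" unfolding Cr_def by (intro compact_sums Ccp compact_cball)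
    have Crpos: "\<forall>x\<in>Cr. P \<bullet> x \<ge> m0/2"
    proof
      fix x assume "x \<in> Cr"
      then obtain y z where yz: "x = y + z" "y \<in> C" "z \<in> cball 0 r" unfolding Cr_def by auto
      have "\<bar>P \<bullet> z\<bar> \<le> norm P * norm z" by (rule Cauchy_Schwarz_ineq2)
      then have "\<bar>P \<bullet> z\<bar> \<le> r" using Ps yz by simp
      moreover have "m0 \<le> P \<bullet> y" using Pge yz by auto
      ultimately show "P \<bullet> x \<ge> m0/2" using yz r by (simp add: inner_add_right)
    qed
    have Crpos': "\<forall>x\<in>Cr. P \<bullet> x > 0" using Crpos m0 by (meson half_gt_zero less_le_trans)
    have Crnz: "\<forall>x\<in>Cr. x \<noteq> 0" using Crpos' by fastforce
    define W' where "W' = (\<lambda>x. x /\<^sub>R norm x) ` Cr"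
    have W's: "W' \<subseteq> sphere 0 1" unfolding W'_def using Crnz by auto
    have W'pos: "\<forall>x\<in>W'. P \<bullet> x > 0" unfolding W'_def using Crpos' Crnz
      by (auto intro!: mult_pos_pos)
    have W'ne: "W' \<noteq> {}"
    proof -
      obtain y where "y \<in> C" using Cne by auto
      moreover have "0 \<in> cball (0::'a) r" using r by simp
      ultimately have "y + 0 \<in> Cr" unfolding Cr_def by blast
      then show ?thesis unfolding W'_def by blast
    qed
    have "continuous_on Cr (\<lambda>x. x /\<^sub>R norm x)"
      using Crnz by (intro continuous_on_scaleR continuous_on_inverse continuous_on_norm continuous_on_id) auto
    then have W'cl: "closed W'" unfolding W'_def
      by (intro compact_imp_closed compact_continuous_image Crcp)
    have W'hemi: "W' \<inter> hemi (- P) = {}"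
    proof -
      have "x \<notin> hemi (- P)" if "x \<in> W'" for x
        using W'pos that unfolding hemi_def by (auto simp: not_le)
      then show ?thesis by blast
    qed
    have mPs: "- P \<in> sphere 0 1" using Ps by simp
    have W'int: "sinterior_point P W'" unfolding sinterior_point_def
    proof (intro exI[of _ r] conjI r subsetI)
      fix x assume x: "x \<in> sphere 0 1 \<inter> ball P r"
      have "m0 *\<^sub>R x = P0 + m0 *\<^sub>R (x - P)" unfolding P_def using m0 by (simp add: algebra_simps)
      moreover have "norm (m0 *\<^sub>R (x - P)) \<le> r"
      proof -
        have "norm (m0 *\<^sub>R (x - P)) = m0 * norm (x - P)" using m0 by simp
        also have "\<dots> \<le> norm (x - P)" using m0 by (simp add: mult_left_le_one_le)
        also have "\<dots> < r" using x by (simp add: dist_norm norm_minus_commute)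
        finally show ?thesis by simp
      qed
      ultimately have "m0 *\<^sub>R x \<in> Cr" unfolding Cr_def using P0C
        by (intro CollectI exI[of _ P0] exI[of _ "m0 *\<^sub>R (x - P)"]) auto
      moreover have "(m0 *\<^sub>R x) /\<^sub>R norm (m0 *\<^sub>R x) = x" using x m0 by simp
      ultimately show "x \<in> W'" unfolding W'_def by (intro image_eqI[of _ _ "m0 *\<^sub>R x"]) auto
    qed
    have W'sc: "sconvex W'" unfolding sconvex_def hemispherical_def
    proof (intro conjI W's bexI[OF _ mPs] W'hemi ballI)
      fix A B assume "A \<in> W'" "B \<in> W'"
      then show "sarc A B \<subseteq> W'" using sarc_normalize_image[OF Crcv Crpos', of A B] unfolding W'_def by simp
    qed
    have "W' \<in> HS" unfolding HS_def using W'ne W's W'cl by simp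
    moreover have "sconvex_body W'" unfolding sconvex_body_def using W'sc W'cl W'int by blast
    ultimately have W'H: "W' \<in> HWulff P" unfolding HWulff_def using W'hemi W'int by simp
    have "hclose W W' e" unfolding hclose_def
    proof (intro conjI ballI)
      fix w assume w: "w \<in> W"
      have "w \<in> Cr" unfolding Cr_def using WC w r by (intro CollectI exI[of _ w] exI[of _ 0]) auto
      moreover have "w /\<^sub>R norm w = w" using w Ws by auto
      ultimately have "w \<in> W'" unfolding W'_def by (intro image_eqI[of _ _ w]) auto
      then show "\<exists>y\<in>W'. dist w y < e" using e by force
    next
      fix x assume "x \<in> W'"
      then obtain y z where yz: "x = (y + z) /\<^sub>R norm (y + z)" "y \<in> C" "z \<in> cball 0 r"
        unfolding W'_def Cr_def by auto
      have yn: "norm y \<ge> m0" using Cnorm yz by auto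
      have yzC: "y + z \<in> Cr" unfolding Cr_def using yz by auto
      have "dist x (y /\<^sub>R norm y) \<le> 2 * norm ((y + z) - y) / norm y" unfolding yz(1) dist_norm
        using Crnz yzC m0 yn by (intro norm_normalize_diff) auto
      also have "\<dots> = 2 * norm z / norm y" by simp
      also have "\<dots> \<le> 2 * r / m0" using yz(3) yn m0 r by (intro frac_le) auto
      also have "\<dots> \<le> e / 2" using r m0 by (simp add: field_simps)
      also have "\<dots> < e" using e by simp
      finally have "dist (y /\<^sub>R norm y) x < e" by (simp add: dist_commute)
      moreover have "y /\<^sub>R norm y \<in> W" using normC yz(2) by blast
      ultimately show "\<exists>w\<in>W. dist w x < e" by blast
    qed
    then show "\<exists>W'\<in>HWulff P. hclose W W' e" using W'H by blast
  qed
qed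

definition hrefl :: "'a::euclidean_space \<Rightarrow> 'a \<Rightarrow> 'a" where
  "hrefl u x = x - (2 * (x \<bullet> u)) *\<^sub>R u"

lemma hrefl_linear: "linear (hrefl u)"
  unfolding hrefl_def
  by (rule linearI) (simp_all add: inner_add_left scaleR_add_left algebra_simps)

lemma hrefl_inner:
  assumes "norm u = 1"
  shows "hrefl u x \<bullet> hrefl u y = x \<bullet> y"
proof -
  have uu: "u \<bullet> u = 1" using assms by (simp add: dot_square_norm)
  show ?thesis unfolding hrefl_def
    by (simp add: inner_diff_left inner_diff_right uu inner_commute algebra_simps)
qed

lemma hrefl_invol:
  assumes "norm u = 1"
  shows "hrefl u (hrefl u x) = x"
proof -
  have uu: "u \<bullet> u = 1" using assms by (simp add: dot_square_norm)
  have "(x - (2 * (x \<bullet> u)) *\<^sub>R u) \<bullet> u = - (x \<bullet> u)"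
    by (simp add: inner_diff_left uu)
  then have "hrefl u (hrefl u x) = (x - (2 * (x \<bullet> u)) *\<^sub>R u) - (2 * (- (x \<bullet> u))) *\<^sub>R u"
    unfolding hrefl_def by simp
  then show ?thesis by simp
qed

definition isom :: "('a::euclidean_space \<Rightarrow> 'a) \<Rightarrow> bool" where
  "isom R \<longleftrightarrow> linear R \<and> (\<forall>x y. R x \<bullet> R y = x \<bullet> y)"

lemma isom_norm: "isom R \<Longrightarrow> norm (R x) = norm x"
  unfolding isom_def by (simp add: norm_eq_sqrt_inner)

lemma isom_comp: "isom R \<Longrightarrow> isom S \<Longrightarrow> isom (R \<circ> S)"
  unfolding isom_def by (auto intro: linear_compose)

lemma isom_hrefl: "norm u = 1 \<Longrightarrow> isom (hrefl u)"
  unfolding isom_def using hrefl_linear hrefl_inner by blast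

lemma isom_sarc:
  assumes R: "isom R"
  shows "sarc (R A) (R B) = R ` sarc A B"
proof -
  have lin: "linear R" using R unfolding isom_def by auto
  have eq: "((1 - t) *\<^sub>R R A + t *\<^sub>R R B) /\<^sub>R norm ((1 - t) *\<^sub>R R A + t *\<^sub>R R B)
      = R (((1 - t) *\<^sub>R A + t *\<^sub>R B) /\<^sub>R norm ((1 - t) *\<^sub>R A + t *\<^sub>R B))" for t
  proof -
    have "(1 - t) *\<^sub>R R A + t *\<^sub>R R B = R ((1 - t) *\<^sub>R A + t *\<^sub>R B)"
      using lin by (simp add: linear_add linear_scale)
    then show ?thesis using isom_norm[OF R] lin by (simp add: linear_scale)
  qed
  show ?thesis unfolding sarc_def using eq by auto
qed

lemma HWulff_transfer:
  assumes R: "isom R" and R': "isom R'" and inv1: "\<forall>x. R (R' x) = x" and inv2: "\<forall>x. R' (R x) = x"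
    and RQ: "R Q = P" and W: "W \<in> HWulff Q"
  shows "R ` W \<in> HWulff P"
proof -
  have lin: "linear R" using R unfolding isom_def by auto
  have nR: "\<And>x. norm (R x) = norm x" using isom_norm[OF R] .
  have inR: "\<And>x y. R x \<bullet> R y = x \<bullet> y" using R unfolding isom_def by auto
  have Wne: "W \<noteq> {}" and Ws: "W \<subseteq> sphere 0 1" and Wcl: "closed W"
    and Whemi: "W \<inter> hemi (- Q) = {}" and Wint: "sinterior_point Q W" and Wsc: "sconvex W"
    using W unfolding HWulff_def HS_def sconvex_body_def by auto
  have RWs: "R ` W \<subseteq> sphere 0 1" using Ws nR by auto
  have Wcp: "compact W" using Wcl Ws by (metis bounded_sphere bounded_subset compact_eq_bounded_closed)
  have "continuous_on W R" using lin by (intro linear_continuous_on) (simp add: linear_conv_bounded_linear)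
  then have RWcl: "closed (R ` W)" by (intro compact_imp_closed compact_continuous_image Wcp)
  have hemiR: "R ` W \<inter> hemi (R Q') = {}" if "W \<inter> hemi Q' = {}" for Q'
  proof -
    have "R w \<notin> hemi (R Q')" if w: "w \<in> W" for w
    proof
      assume "R w \<in> hemi (R Q')"
      then have "Q' \<bullet> w \<ge> 0" unfolding hemi_def using inR by simp
      then have "w \<in> hemi Q'" using w Ws unfolding hemi_def by auto
      then show False using \<open>W \<inter> hemi Q' = {}\<close> w by auto
    qed
    then show ?thesis by auto
  qed
  have RWhemi: "R ` W \<inter> hemi (- P) = {}"
    using hemiR[OF Whemi] RQ lin by (simp add: linear_neg)
  have RWint: "sinterior_point P (R ` W)"
  proof -
    obtain e where e: "e > 0" "sphere 0 1 \<inter> ball Q e \<subseteq> W" using Wint unfolding sinterior_point_def by auto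
    have "sphere 0 1 \<inter> ball P e \<subseteq> R ` W"
    proof
      fix x assume x: "x \<in> sphere 0 1 \<inter> ball P e"
      have nR': "\<And>x. norm (R' x) = norm x" using isom_norm[OF R'] .
      have lin': "linear R'" using R' unfolding isom_def by auto
      have "R' P = Q" using inv2 RQ by metis
      then have "dist Q (R' x) = norm (R' (P - x))" using lin' by (simp add: dist_norm linear_diff)
      also have "\<dots> = dist P x" using nR' by (simp add: dist_norm)
      finally have "R' x \<in> sphere 0 1 \<inter> ball Q e" using x nR' by auto
      then have "R' x \<in> W" using e by auto
      then show "x \<in> R ` W" using inv1 by (metis image_eqI)
    qed
    then show ?thesis unfolding sinterior_point_def using e by blast
  qed
  have RWsc: "sconvex (R ` W)"
  proof -
    obtain Q' where Q': "Q' \<in> sphere 0 1" "W \<inter> hemi Q' = {}" using Wsc unfolding sconvex_def hemispherical_def by auto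
    have "R Q' \<in> sphere 0 1" using Q' nR by auto
    moreover have arc: "\<forall>A\<in>W. \<forall>B\<in>W. sarc A B \<subseteq> W" using Wsc unfolding sconvex_def by auto
    have "\<forall>A\<in>R ` W. \<forall>B\<in>R ` W. sarc A B \<subseteq> R ` W"
    proof (intro ballI)
      fix A B assume "A \<in> R ` W" "B \<in> R ` W"
      then obtain a b where ab: "a \<in> W" "b \<in> W" "A = R a" "B = R b" by auto
      show "sarc A B \<subseteq> R ` W" unfolding ab isom_sarc[OF R] using arc ab by blast
    qed
    ultimately show ?thesis unfolding sconvex_def hemispherical_def using RWs hemiR[OF Q'(2)] by blast
  qed
  have "R ` W \<in> HS" unfolding HS_def using Wne RWs RWcl by simp
  moreover have "sconvex_body (R ` W)" unfolding sconvex_body_def using RWsc RWcl RWint by blast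
  ultimately show ?thesis unfolding HWulff_def using RWhemi RWint by simp
qed

lemma rotation_near:
  fixes P Q :: "'a::euclidean_space"
  assumes P: "P \<in> sphere 0 1" and Q: "Q \<in> sphere 0 1" and d: "dist Q P < 1"
  shows "\<exists>R R'. isom R \<and> isom R' \<and> (\<forall>x. R (R' x) = x) \<and> (\<forall>x. R' (R x) = x) \<and> R Q = P
     \<and> (\<forall>x\<in>sphere 0 1. dist (R x) x \<le> 8 * dist Q P)"
proof -
  have nP: "norm P = 1" and nQ: "norm Q = 1" using P Q by auto
  have PP: "P \<bullet> P = 1" and QQ: "Q \<bullet> Q = 1" using nP nQ by (simp_all add: dot_square_norm)
  have "norm (2 *\<^sub>R P) \<le> norm (Q + P) + norm (Q - P)"
  proof -
    have "2 *\<^sub>R P = (Q + P) - (Q - P)" by (simp add: scaleR_2)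
    then show ?thesis using norm_triangle_ineq4[of "Q + P" "Q - P"] by simp
  qed
  then have QPn: "norm (Q + P) > 1" using d nP by (simp add: dist_norm)
  then have QP0: "Q + P \<noteq> 0" by auto
  define a where "a = (Q + P) /\<^sub>R norm (Q + P)"
  have na: "norm a = 1" unfolding a_def using QP0 by simp
  have "norm (a - (2 *\<^sub>R P) /\<^sub>R norm (2 *\<^sub>R P)) \<le> 2 * norm ((Q + P) - 2 *\<^sub>R P) / norm (2 *\<^sub>R P)"
    unfolding a_def using QP0 nP by (intro norm_normalize_diff) auto
  moreover have "(2 *\<^sub>R P) /\<^sub>R norm (2 *\<^sub>R P) = P" using nP by simp
  moreover have "(Q + P) - 2 *\<^sub>R P = Q - P" by (simp add: scaleR_2)
  ultimately have aP: "norm (a - P) \<le> dist Q P" using nP by (simp add: dist_norm)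
  define R where "R = hrefl P \<circ> hrefl a"
  define R' where "R' = hrefl a \<circ> hrefl P"
  have iR: "isom R" unfolding R_def by (intro isom_comp isom_hrefl nP na)
  have iR': "isom R'" unfolding R'_def by (intro isom_comp isom_hrefl nP na)
  have inv1: "\<forall>x. R (R' x) = x" unfolding R_def R'_def using hrefl_invol[OF na] hrefl_invol[OF nP] by simp
  have inv2: "\<forall>x. R' (R x) = x" unfolding R_def R'_def using hrefl_invol[OF na] hrefl_invol[OF nP] by simp
  have RQ: "R Q = P"
  proof -
    have sq: "norm (Q + P) ^ 2 = 2 + 2 * (Q \<bullet> P)"
      by (simp add: power2_norm_eq_inner inner_add_left inner_add_right QQ PP inner_commute)
    have qa: "Q \<bullet> a = (Q \<bullet> (Q + P)) / norm (Q + P)" unfolding a_def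
      by (simp add: divide_inverse mult.commute)
    have "(2 * (Q \<bullet> a)) *\<^sub>R a = (2 * (Q \<bullet> a) / norm (Q + P)) *\<^sub>R (Q + P)"
      unfolding a_def by (simp add: divide_inverse)
    also have "2 * (Q \<bullet> a) / norm (Q + P) = 2 * (Q \<bullet> (Q + P)) / (norm (Q + P))^2"
      unfolding qa by (simp add: power2_eq_square)
    finally have "(2 * (Q \<bullet> a)) *\<^sub>R a = (2 * (Q \<bullet> (Q + P)) / (norm (Q + P))^2) *\<^sub>R (Q + P)" .
    also have "2 * (Q \<bullet> (Q + P)) / (norm (Q + P))^2 = 1"
    proof -
      have "(norm (Q + P))^2 > 1" using QPn by (simp add: one_less_power)
      then have "2 + 2 * (Q \<bullet> P) \<noteq> 0" using sq by simp
      then show ?thesis unfolding sq by (simp add: inner_add_right QQ)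
    qed
    finally have "hrefl a Q = - P" unfolding hrefl_def by simp
    then show ?thesis unfolding R_def hrefl_def using PP by (simp add: scaleR_2)
  qed
  have bound: "dist (R x) x \<le> 8 * dist Q P" if x: "x \<in> sphere 0 1" for x
  proof -
    define d where "d = a - P"
    have nd: "norm d \<le> dist Q P" using aP unfolding d_def .
    define \<alpha> where "\<alpha> = - 2 * (x \<bullet> a)"
    define \<beta> where "\<beta> = - 2 * (x \<bullet> P) + 4 * (x \<bullet> a) * (a \<bullet> P)"
    have h1: "hrefl a x \<bullet> P = x \<bullet> P - 2 * (x \<bullet> a) * (a \<bullet> P)"
      unfolding hrefl_def by (simp add: inner_diff_left)
    have "R x = hrefl a x - (2 * (hrefl a x \<bullet> P)) *\<^sub>R P"
      unfolding R_def by (simp add: hrefl_def[of P "hrefl a x"])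
    also have "\<dots> = (x - (2 * (x \<bullet> a)) *\<^sub>R a) - (2 * (x \<bullet> P - 2 * (x \<bullet> a) * (a \<bullet> P))) *\<^sub>R P"
      unfolding h1 by (simp add: hrefl_def[of a x])
    finally have Rx: "R x = (x - (2 * (x \<bullet> a)) *\<^sub>R a) - (2 * (x \<bullet> P - 2 * (x \<bullet> a) * (a \<bullet> P))) *\<^sub>R P" .
    have be: "\<beta> = - (2 * (x \<bullet> P - 2 * (x \<bullet> a) * (a \<bullet> P)))" unfolding \<beta>_def by (simp add: algebra_simps)
    have "R x - x = \<alpha> *\<^sub>R a + \<beta> *\<^sub>R P"
      unfolding Rx be \<alpha>_def by (simp flip: scaleR_minus_left)
    also have "\<dots> = \<alpha> *\<^sub>R d + (\<alpha> + \<beta>) *\<^sub>R P" unfolding d_def by (simp add: algebra_simps)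
    also have "\<alpha> + \<beta> = 2 * (x \<bullet> d) + 4 * (x \<bullet> a) * (d \<bullet> P)"
    proof -
      have aP1: "a \<bullet> P = 1 + d \<bullet> P" unfolding d_def using PP by (simp add: inner_diff_left)
      have xd1: "x \<bullet> d = x \<bullet> a - x \<bullet> P" unfolding d_def by (simp add: inner_diff_right)
      show ?thesis unfolding \<alpha>_def \<beta>_def aP1 xd1 by (simp add: algebra_simps)
    qed
    finally have eq: "R x - x = \<alpha> *\<^sub>R d + (2 * (x \<bullet> d) + 4 * (x \<bullet> a) * (d \<bullet> P)) *\<^sub>R P" .
    have nx: "norm x = 1" using x by simp
    have xa: "\<bar>x \<bullet> a\<bar> \<le> 1" using Cauchy_Schwarz_ineq2[of x a] nx na by simp
    have xd: "\<bar>x \<bullet> d\<bar> \<le> norm d" using Cauchy_Schwarz_ineq2[of x d] nx by simp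
    have dP: "\<bar>d \<bullet> P\<bar> \<le> norm d" using Cauchy_Schwarz_ineq2[of d P] nP by simp
    have "norm (R x - x) \<le> norm (\<alpha> *\<^sub>R d) + norm ((2 * (x \<bullet> d) + 4 * (x \<bullet> a) * (d \<bullet> P)) *\<^sub>R P)"
      unfolding eq by (rule norm_triangle_ineq)
    also have "norm (\<alpha> *\<^sub>R d) = \<bar>\<alpha>\<bar> * norm d" by simp
    also have "norm ((2 * (x \<bullet> d) + 4 * (x \<bullet> a) * (d \<bullet> P)) *\<^sub>R P) = \<bar>2 * (x \<bullet> d) + 4 * (x \<bullet> a) * (d \<bullet> P)\<bar>"
      using nP by simp
    also have "\<bar>\<alpha>\<bar> * norm d \<le> 2 * norm d" unfolding \<alpha>_def using xa
      using mult_right_mono[OF xa norm_ge_zero[of d]] by (simp add: abs_mult)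
    also have "\<bar>2 * (x \<bullet> d) + 4 * (x \<bullet> a) * (d \<bullet> P)\<bar> \<le> 2 * norm d + 4 * norm d"
    proof -
      have "\<bar>(x \<bullet> a) * (d \<bullet> P)\<bar> \<le> 1 * norm d" unfolding abs_mult
        using xa dP by (intro mult_mono) auto
      then show ?thesis using xd abs_triangle_ineq[of "2 * (x \<bullet> d)" "4 * ((x \<bullet> a) * (d \<bullet> P))"]
        by (simp add: abs_mult mult.assoc)
    qed
    finally have "norm (R x - x) \<le> 8 * norm d" by simp
    then show ?thesis using nd by (simp add: dist_norm)
  qed
  show ?thesis using iR iR' inv1 inv2 RQ bound by blast
qed

lemma hclose_mono: "hclose X W a \<Longrightarrow> a \<le> b \<Longrightarrow> hclose X W b"
  unfolding hclose_def by (meson less_le_trans)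

lemma HWulff_sub: "HWulff P \<subseteq> Hsconv"
  unfolding HWulff_def Hsconv_def HS_def sconvex_body_def by auto

lemma Hsconv_ok: "\<forall>W\<in>(Hsconv :: 'a::euclidean_space set set). W \<noteq> {} \<and> W \<subseteq> sphere 0 1"
  unfolding Hsconv_def sconvex_def hemispherical_def by auto

lemma HWulff_ok: "\<forall>W\<in>HWulff (P::'a::euclidean_space). W \<noteq> {} \<and> W \<subseteq> sphere 0 1"
  unfolding HWulff_def HS_def by auto

theorem proposition3:
  assumes "DIM('a::euclidean_space) \<ge> 2"
  shows "(\<Union>P\<in>sphere (0::'a) 1. hclosure (HWulff P)) = hclosure (Hsconv :: 'a set set)"
proof
  show "(\<Union>P\<in>sphere (0::'a) 1. hclosure (HWulff P)) \<subseteq> hclosure Hsconv"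
    unfolding hclosure_def using HWulff_sub by blast
next
  show "hclosure (Hsconv :: 'a set set) \<subseteq> (\<Union>P\<in>sphere (0::'a) 1. hclosure (HWulff P))"
  proof
    fix X :: "'a set" assume "X \<in> hclosure Hsconv"
    then have XHS: "X \<in> HS" and Xa: "\<forall>e>0. \<exists>W\<in>Hsconv. hclose X W e"
      unfolding hclosure_alt[OF Hsconv_ok] by auto
    have "\<forall>k. \<exists>W\<in>Hsconv. hclose X W (1 / Suc k)" using Xa by simp
    then obtain Wf where Wf: "\<forall>k. Wf k \<in> Hsconv \<and> hclose X (Wf k) (1 / Suc k)" by metis
    have "\<forall>k. \<exists>P\<in>sphere 0 1. \<forall>e>0. \<exists>W'\<in>HWulff P. hclose (Wf k) W' e"
      using Wf approx_wulff by blast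
    then obtain Pf where Pf: "\<forall>k. Pf k \<in> sphere (0::'a) 1 \<and> (\<forall>e>0. \<exists>W'\<in>HWulff (Pf k). hclose (Wf k) W' e)"
      by metis
    have "seq_compact (sphere (0::'a) 1)" by (simp add: compact_imp_seq_compact)
    then obtain P r where P: "P \<in> sphere (0::'a) 1" and r: "strict_mono r" and lim: "(Pf \<circ> r) \<longlonglongrightarrow> P"
      unfolding seq_compact_def using Pf by meson
    have "X \<in> hclosure (HWulff P)"
      unfolding hclosure_alt[OF HWulff_ok]
    proof (intro CollectI conjI XHS allI impI)
      fix e :: real assume e: "e > 0"
      obtain N where N: "\<forall>n\<ge>N. dist ((Pf \<circ> r) n) P < min 1 (e / 24)"
        using lim e unfolding lim_sequentially by (meson min_less_iff_conj zero_less_divide_iff zero_less_numeral zero_less_one)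
      obtain M where M: "inverse (real (Suc M)) < e / 3" using reals_Archimedean[of "e/3"] e by auto
      define n where "n = max N M"
      define k where "k = r n"
      have kM: "M \<le> k" unfolding k_def n_def using seq_suble[OF r, of "max N M"] by simp
      have dk: "dist (Pf k) P < min 1 (e / 24)" using N unfolding k_def n_def by simp
      have hk: "1 / real (Suc k) < e / 3"
      proof -
        have "1 / real (Suc k) \<le> 1 / real (Suc M)" using kM by (intro divide_left_mono) auto
        then show ?thesis using M by (simp add: inverse_eq_divide)
      qed
      obtain W' where W': "W' \<in> HWulff (Pf k)" "hclose (Wf k) W' (e / 3)"
        using Pf e by (meson zero_less_divide_iff zero_less_numeral)
      obtain R R' where RR: "isom R" "isom R'" "\<forall>x. R (R' x) = x" "\<forall>x. R' (R x) = x" "R (Pf k) = P"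
        and Rb: "\<forall>x\<in>sphere 0 1. dist (R x) x \<le> 8 * dist (Pf k) P"
        using rotation_near[OF P _ ] Pf dk by (metis min_less_iff_conj)
      have RW: "R ` W' \<in> HWulff P" by (rule HWulff_transfer[OF RR W'(1)])
      have W's: "W' \<subseteq> sphere 0 1" using W'(1) HWulff_ok by blast
      have "hclose W' (R ` W') (e / 3)" unfolding hclose_def
      proof (intro conjI ballI)
        fix x assume x: "x \<in> W'"
        have "dist x (R x) \<le> 8 * dist (Pf k) P" using Rb x W's by (auto simp: dist_commute)
        also have "\<dots> < e / 3" using dk by simp
        finally show "\<exists>y\<in>R ` W'. dist x y < e / 3" using x by blast
      next
        fix y assume "y \<in> R ` W'"
        then obtain x where x: "x \<in> W'" "y = R x" by auto
        have "dist x (R x) \<le> 8 * dist (Pf k) P" using Rb x W's by (auto simp: dist_commute)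
        also have "\<dots> < e / 3" using dk by simp
        finally show "\<exists>x\<in>W'. dist x y < e / 3" using x by blast
      qed
      then have "hclose X (R ` W') (1 / Suc k + e / 3 + e / 3)"
        by (rule hclose_trans[OF hclose_trans[OF conjunct2[OF Wf[rule_format, of k]] W'(2)]])
      then have "hclose X (R ` W') e" by (rule hclose_mono) (use hk in simp)
      then show "\<exists>W\<in>HWulff P. hclose X W e" using RW by blast
    qed
    then show "X \<in> (\<Union>P\<in>sphere (0::'a) 1. hclosure (HWulff P))" using P by blast
  qed
qed

end
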